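(* Let $(X,\alpha,T)$ be a dynamical system with $T=\mathbb{Z}$ or $T=\mathbb{R}$ acting by homeomorphisms on a compact metrizable space $X$, and suppose that forward proximality and backward proximality are transitive relations. Then exactly one of the following two cases occurs. Case 1: the following equivalent statements hold: (i) proximality is transitive; (ii) $E$ has a unique minimal left ideal; (iii) $\mathcal M=\mathcal M^+=\mathcal M^-$; (iv) $J^+_{min}=J^-_{min}$. Case 2: the following equivalent statements hold: (i) proximality is not transitive; (ii) $E$ has exactly two minimal left ideals, namely $\mathcal M^+$ and $\mathcal M^-$; (iii) $\mathcal M^+\cap\mathcal M^-=\emptyset$; (iv) $J^+_{min}\cap J^-_{min}=\emptyset$.
   Context: $X$ is a compact metrizable space with metric $d$, $T=\mathbb{Z}$ or $\mathbb{R}$ acts by homeomorphisms $\alpha^t$ with $\alpha^{s+t}=\alpha^s\circ\alpha^t$, $\alpha^0=\mathrm{id}$; $T^+$ and $T^-$ denote the nonnegative and nonpositive elements of $T$. $X^X$ is the semigroup of all maps $X\to X$ under composition with the topology of pointwise convergence. $E=E(X,T)$ is the closure of $\{\alpha^t:t\in T\}$ in $X^X$ and $E^\pm$ is the closure of $\{\alpha^t:t\in T^\pm\}$; these are monoids under composition, each possessing a unique minimal two-sided ideal (kernel), denoted $\mathcal M$, $\mathcal M^+$, $\mathcal M^-$ respectively. An idempotent $p$ ($pp=p$) is minimal if it is minimal for the order $p\le q \iff p=pq=qp$; $J^\pm_{min}$ is the set of minimal idempotents of $E^\pm$. Points $x,y$ are proximal if $\inf_{t\in T}d(\alpha^t x,\alpha^t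 y)=0$, forward proximal if $\inf_{t\in T^+}d(\alpha^t x,\alpha^t y)=0$, backward proximal if $\inf_{t\in T^-}d(\alpha^t x,\alpha^t y)=0$. A left ideal of a semigroup $S$ is a non-empty $I\subset S$ with $SI\subset I$. *)

theory Defs
  imports "HOL-Analysis.Analysis"
begin

text \<open>Enveloping semigroup: closure of the set of time maps alpha t (t in S) in the
  space of all self-maps, with the topology of pointwise convergence
  (the product topology on the function type, from HOL-Analysis Function_Topology).\<close>
definition enveloping :: "(real \<Rightarrow> 'a \<Rightarrow> 'a::topological_space) \<Rightarrow> real set \<Rightarrow> ('a \<Rightarrow> 'a) set" where
  "enveloping \<alpha> S = closure (\<alpha> ` S)"

definition left_ideal :: "('a \<Rightarrow> 'a) set \<Rightarrow> ('a \<Rightarrow> 'a) set \<Rightarrow> bool" where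
  "left_ideal S I \<longleftrightarrow> I \<noteq> {} \<and> I \<subseteq> S \<and> (\<forall>p\<in>S. \<forall>q\<in>I. p \<circ> q \<in> I)"

definition minimal_left_ideal :: "('a \<Rightarrow> 'a) set \<Rightarrow> ('a \<Rightarrow> 'a) set \<Rightarrow> bool" where
  "minimal_left_ideal S I \<longleftrightarrow> left_ideal S I \<and> (\<forall>J. left_ideal S J \<and> J \<subseteq> I \<longrightarrow> J = I)"

definition two_sided_ideal :: "('a \<Rightarrow> 'a) set \<Rightarrow> ('a \<Rightarrow> 'a) set \<Rightarrow> bool" where
  "two_sided_ideal S I \<longleftrightarrow> I \<noteq> {} \<and> I \<subseteq> S \<and> (\<forall>p\<in>S. \<forall>q\<in>I. p \<circ> q \<in> I \<and> q \<circ> p \<in> I)"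

definition minimal_two_sided_ideal :: "('a \<Rightarrow> 'a) set \<Rightarrow> ('a \<Rightarrow> 'a) set \<Rightarrow> bool" where
  "minimal_two_sided_ideal S I \<longleftrightarrow>
     two_sided_ideal S I \<and> (\<forall>J. two_sided_ideal S J \<and> J \<subseteq> I \<longrightarrow> J = I)"

definition kernel :: "('a \<Rightarrow> 'a) set \<Rightarrow> ('a \<Rightarrow> 'a) set" where
  "kernel S = (THE I. minimal_two_sided_ideal S I)"

definition idem_le :: "('a \<Rightarrow> 'a) \<Rightarrow> ('a \<Rightarrow> 'a) \<Rightarrow> bool" where
  "idem_le p q \<longleftrightarrow> p = p \<circ> q \<and> p = q \<circ> p"

definition minimal_idempotents :: "('a \<Rightarrow> 'a) set \<Rightarrow> ('a \<Rightarrow> 'a) set" where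
  "minimal_idempotents S =
     {p \<in> S. p \<circ> p = p \<and> (\<forall>q\<in>S. q \<circ> q = q \<and> idem_le q p \<longrightarrow> q = p)}"

definition proximal_on :: "(real \<Rightarrow> 'a \<Rightarrow> 'a::metric_space) \<Rightarrow> real set \<Rightarrow> 'a \<Rightarrow> 'a \<Rightarrow> bool" where
  "proximal_on \<alpha> S x y \<longleftrightarrow> (INF t\<in>S. dist (\<alpha> t x) (\<alpha> t y)) = 0"

definition transitive_rel :: "('a \<Rightarrow> 'a \<Rightarrow> bool) \<Rightarrow> bool" where
  "transitive_rel R \<longleftrightarrow> (\<forall>x y z. R x y \<and> R y z \<longrightarrow> R x z)"

end

theory Submission
  imports Defs
begin
lemma compact_fun_UNIV:
  assumes "compact (UNIV::'a::topological_space set)"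
  shows "compact (UNIV :: ('b \<Rightarrow> 'a) set)"
proof -
  have "compact_space (product_topology (\<lambda>i::'b. euclidean::'a topology) UNIV)"
    using assms by (subst compact_space_product_topology) (simp add: compact_space_def)
  then show ?thesis by (simp add: euclidean_product_topology compact_space_def)
qed


lemma compact_fun_closed:
  fixes K :: "('b \<Rightarrow> 'a::metric_space) set"
  assumes "compact K"
  shows "closed K"
proof -
  have "Hausdorff_space (product_topology (\<lambda>i::'b. euclidean::'a topology) UNIV)"
    by (rule iffD2[OF Hausdorff_space_product_topology], rule disjI2, intro ballI Hausdorff_space_euclidean)
  then have H: "Hausdorff_space (euclidean :: ('b \<Rightarrow> 'a) topology)" by (simp only: euclidean_product_topology)
  have "compactin euclidean K" using assms by simp
  then have "closedin euclidean K" by (rule compactin_imp_closedin[OF H])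
  then show ?thesis by (simp only: closed_closedin)
qed

lemma closed_fun_eq:
  fixes f g :: "'x::topological_space \<Rightarrow> 'd \<Rightarrow> 'a::metric_space"
  assumes "\<And>y. continuous_on UNIV (\<lambda>p. f p y)" "\<And>y. continuous_on UNIV (\<lambda>p. g p y)"
  shows "closed {p. f p = g p}"
proof -
  have "{p. f p = g p} = (\<Inter>y. {p. f p y = g p y})" by (auto simp: fun_eq_iff)
  moreover have "closed (\<Inter>y. {p. f p y = g p y})"
    by (intro closed_INT ballI closed_Collect_eq assms)
  ultimately show ?thesis by simp
qed

lemma closed_Zorn_min:
  fixes F :: "'b::topological_space set set"
  assumes K: "compact K" and ne: "F \<noteq> {}"
    and cl: "\<And>A. A \<in> F \<Longrightarrow> closed A \<and> A \<noteq> {} \<and> A \<subseteq> K"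
    and ch: "\<And>C. C \<noteq> {} \<Longrightarrow> C \<subseteq> F \<Longrightarrow> (\<forall>A\<in>C. \<forall>B\<in>C. A \<subseteq> B \<or> B \<subseteq> A) \<Longrightarrow> \<Inter>C \<noteq> {} \<Longrightarrow> \<Inter>C \<in> F"
  shows "\<exists>M\<in>F. \<forall>A\<in>F. A \<subseteq> M \<longrightarrow> A = M"
proof -
  have "\<exists>m\<in>F. \<forall>a\<in>F. (\<lambda>A B. B \<subseteq> A) m a \<longrightarrow> a = m"
  proof (rule predicate_Zorn)
    show "partial_order_on F (relation_of (\<lambda>A B. B \<subseteq> A) F)"
      by (rule partial_order_on_relation_ofI) auto
    fix C assume C: "C \<in> Chains (relation_of (\<lambda>A B. B \<subseteq> A) F)"
    show "\<exists>u\<in>F. \<forall>a\<in>C. (\<lambda>A B. B \<subseteq> A) a u"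
    proof (cases "C = {}")
      case True with ne show ?thesis by auto
    next
      case False
      have CF: "C \<subseteq> F"
      proof
        fix A assume "A \<in> C"
        then have "(A, A) \<in> relation_of (\<lambda>A B. B \<subseteq> A) F" using C unfolding Chains_def by blast
        then show "A \<in> F" unfolding relation_of_def by simp
      qed
      have chn: "\<forall>A\<in>C. \<forall>B\<in>C. A \<subseteq> B \<or> B \<subseteq> A"
      proof (intro ballI)
        fix A B assume "A \<in> C" "B \<in> C"
        then have "(A, B) \<in> relation_of (\<lambda>A B. B \<subseteq> A) F \<or> (B, A) \<in> relation_of (\<lambda>A B. B \<subseteq> A) F"
          using C unfolding Chains_def by blast
        then show "A \<subseteq> B \<or> B \<subseteq> A" unfolding relation_of_def by auto
      qed
      have "K \<inter> \<Inter>C \<noteq> {}"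
      proof (rule compact_imp_fip[OF K])
        show "closed T" if "T\<in>C" for T using cl CF that by blast
        fix F' assume F': "finite F'" "F' \<subseteq> C"
        show "K \<inter> \<Inter>F' \<noteq> {}"
        proof (cases "F' = {}")
          case True
          obtain A where "A \<in> C" using False by auto
          moreover have "A \<noteq> {}" "A \<subseteq> K" using cl CF \<open>A \<in> C\<close> by auto
          ultimately show ?thesis using True by auto
        next
          case False
          have "subset.chain F' F'" using F' chn by (auto simp: subset_chain_def)
          then have I: "\<Inter>F' \<in> F'" using Inter_in_chain[OF F'(1) False] by blast
          have "\<Inter>F' \<noteq> {}" "\<Inter>F' \<subseteq> K" using cl[of "\<Inter>F'"] CF F'(2) I by auto
          then show ?thesis by auto
        qed
      qed
      then have "\<Inter>C \<noteq> {}" by blast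
      then have "\<Inter>C \<in> F" using ch[OF False CF chn] by blast
      then show ?thesis by auto
    qed
  qed
  then show ?thesis by auto
qed

lemma li_ne: "left_ideal S I \<Longrightarrow> I \<noteq> {}" unfolding left_ideal_def by blast
lemma li_sub: "left_ideal S I \<Longrightarrow> I \<subseteq> S" unfolding left_ideal_def by blast
lemma li_mul: "left_ideal S I \<Longrightarrow> p \<in> S \<Longrightarrow> q \<in> I \<Longrightarrow> p \<circ> q \<in> I" unfolding left_ideal_def by blast
lemma left_idealI: "I \<noteq> {} \<Longrightarrow> I \<subseteq> S \<Longrightarrow> (\<And>p q. p \<in> S \<Longrightarrow> q \<in> I \<Longrightarrow> p \<circ> q \<in> I) \<Longrightarrow> left_ideal S I"
  unfolding left_ideal_def by blast
lemma mli_min: "minimal_left_ideal S L \<Longrightarrow> left_ideal S J \<Longrightarrow> J \<subseteq> L \<Longrightarrow> J = L"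
  unfolding minimal_left_ideal_def by blast
lemma mli_liD: "minimal_left_ideal S L \<Longrightarrow> left_ideal S L"
  unfolding minimal_left_ideal_def by blast
lemma ts_ne: "two_sided_ideal S I \<Longrightarrow> I \<noteq> {}" unfolding two_sided_ideal_def by blast
lemma ts_sub: "two_sided_ideal S I \<Longrightarrow> I \<subseteq> S" unfolding two_sided_ideal_def by blast
lemma ts_l: "two_sided_ideal S I \<Longrightarrow> p \<in> S \<Longrightarrow> q \<in> I \<Longrightarrow> p \<circ> q \<in> I" unfolding two_sided_ideal_def by blast
lemma ts_r: "two_sided_ideal S I \<Longrightarrow> p \<in> S \<Longrightarrow> q \<in> I \<Longrightarrow> q \<circ> p \<in> I" unfolding two_sided_ideal_def by blast
lemma two_sidedI: "I \<noteq> {} \<Longrightarrow> I \<subseteq> S \<Longrightarrow> (\<And>p q. p \<in> S \<Longrightarrow> q \<in> I \<Longrightarrow> p \<circ> q \<in> I \<and> q \<circ> p \<in> I) \<Longrightarrow> two_sided_ideal S I"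
  unfolding two_sided_ideal_def by blast
lemma mts_ts: "minimal_two_sided_ideal S I \<Longrightarrow> two_sided_ideal S I" unfolding minimal_two_sided_ideal_def by blast
lemma mts_min: "minimal_two_sided_ideal S I \<Longrightarrow> two_sided_ideal S J \<Longrightarrow> J \<subseteq> I \<Longrightarrow> J = I"
  unfolding minimal_two_sided_ideal_def by blast
lemma ts_li: "two_sided_ideal S I \<Longrightarrow> left_ideal S I" unfolding two_sided_ideal_def left_ideal_def by blast

lemma prox_iff:
  fixes \<alpha> :: "real \<Rightarrow> 'a::metric_space \<Rightarrow> 'a"
  assumes cpt: "compact (closure (\<alpha> ` T'))" and ne: "T' \<noteq> {}"
  shows "proximal_on \<alpha> T' x y \<longleftrightarrow> (\<exists>p\<in>closure (\<alpha> ` T'). p x = p y)"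
proof -
  define f where "f = (\<lambda>p::'a\<Rightarrow>'a. dist (p x) (p y))"
  have fc: "continuous_on UNIV f" unfolding f_def
    by (intro continuous_on_dist continuous_on_product_coordinates)
  have bdd: "bdd_below ((\<lambda>t. dist (\<alpha> t x) (\<alpha> t y)) ` T')"
    by (rule bdd_belowI[of _ 0]) auto
  show ?thesis
  proof
    assume pr: "proximal_on \<alpha> T' x y"
    show "\<exists>p\<in>closure (\<alpha> ` T'). p x = p y"
    proof (rule ccontr)
      assume nex: "\<not> ?thesis"
      have cne: "closure (\<alpha> ` T') \<noteq> {}" using ne by auto
      obtain p0 where p0: "p0 \<in> closure (\<alpha> ` T')" "\<And>q. q \<in> closure (\<alpha> ` T') \<Longrightarrow> f p0 \<le> f q"
        using continuous_attains_inf[OF cpt cne continuous_on_subset[OF fc]] by blast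
      have "p0 x \<noteq> p0 y" using nex p0(1) by blast
      then have pos: "f p0 > 0" unfolding f_def by simp
      have "f p0 \<le> (INF t\<in>T'. dist (\<alpha> t x) (\<alpha> t y))"
      proof (rule cINF_greatest[OF ne])
        fix t assume "t \<in> T'"
        then have "\<alpha> t \<in> closure (\<alpha> ` T')" by (rule subsetD[OF closure_subset imageI])
        then show "f p0 \<le> dist (\<alpha> t x) (\<alpha> t y)" using p0(2) unfolding f_def by blast
      qed
      then show False using pr pos unfolding proximal_on_def by simp
    qed
  next
    assume "\<exists>p\<in>closure (\<alpha> ` T'). p x = p y"
    then obtain p where p: "p \<in> closure (\<alpha> ` T')" "p x = p y" by blast
    have ge: "0 \<le> (INF t\<in>T'. dist (\<alpha> t x) (\<alpha> t y))"
      by (rule cINF_greatest[OF ne]) simp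
    have small: "\<exists>t\<in>T'. dist (\<alpha> t x) (\<alpha> t y) < e" if e: "e > 0" for e
    proof -
      have op: "open {q. f q < e}"
        using open_Collect_less[OF fc continuous_on_const] .
      have "p \<in> {q. f q < e}" using p e unfolding f_def by simp
      then have "{q. f q < e} \<inter> closure (\<alpha> ` T') \<noteq> {}" using p(1) by blast
      then have "{q. f q < e} \<inter> (\<alpha> ` T') \<noteq> {}" using open_Int_closure_eq_empty[OF op] by blast
      then obtain t where "t \<in> T'" "f (\<alpha> t) < e" by blast
      then show ?thesis unfolding f_def by blast
    qed
    have "\<not> (INF t\<in>T'. dist (\<alpha> t x) (\<alpha> t y)) > 0"
    proof
      assume gt: "(INF t\<in>T'. dist (\<alpha> t x) (\<alpha> t y)) > 0"
      obtain t where t: "t \<in> T'" "dist (\<alpha> t x) (\<alpha> t y) < (INF t\<in>T'. dist (\<alpha> t x) (\<alpha> t y))"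
        using small[OF gt] by blast
      have "(INF t\<in>T'. dist (\<alpha> t x) (\<alpha> t y)) \<le> dist (\<alpha> t x) (\<alpha> t y)"
        by (rule cINF_lower[OF bdd t(1)])
      then show False using t(2) by simp
    qed
    then show "proximal_on \<alpha> T' x y" using ge unfolding proximal_on_def by simp
  qed
qed

locale envsg =
  fixes A :: "('a::metric_space \<Rightarrow> 'a) set"
  assumes cptX: "compact (UNIV::'a set)"
    and contA: "\<And>f. f \<in> A \<Longrightarrow> continuous_on UNIV f"
    and idA: "id \<in> A"
    and compA: "\<And>f g. f \<in> A \<Longrightarrow> g \<in> A \<Longrightarrow> f \<circ> g \<in> A"
begin

lemma rho_cont: "continuous_on UNIV (\<lambda>p::'a\<Rightarrow>'a. p \<circ> q)"
  by (rule continuous_on_coordinatewise_then_product) (simp add: o_def)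

lemma lam_cont:
  assumes "continuous_on UNIV f"
  shows "continuous_on UNIV (\<lambda>p::'a\<Rightarrow>'a. f \<circ> p)"
proof (rule continuous_on_coordinatewise_then_product)
  fix i
  have "continuous_on UNIV (f \<circ> (\<lambda>p::'a\<Rightarrow>'a. p i))"
    by (rule continuous_on_compose) (auto intro: continuous_on_subset[OF assms])
  then show "continuous_on UNIV (\<lambda>p::'a\<Rightarrow>'a. (f \<circ> p) i)" by (simp add: o_def)
qed

lemma compact_S: "compact (closure A)"
  using compact_Int_closed[OF compact_fun_UNIV[OF cptX] closed_closure, of A] by simp

lemma left_A: assumes "f \<in> A" "q \<in> closure A" shows "f \<circ> q \<in> closure A"
proof -
  have "(\<lambda>p. f \<circ> p) ` closure A \<subseteq> closure A"
    by (rule image_closure_subset[OF continuous_on_subset[OF lam_cont[OF contA[OF assms(1)]]] closed_closure])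
      (use assms(1) compA closure_subset[of A] in blast)+
  then show ?thesis using assms(2) by blast
qed

lemma S_comp: assumes "p \<in> closure A" "q \<in> closure A" shows "p \<circ> q \<in> closure A"
proof -
  have "(\<lambda>p. p \<circ> q) ` closure A \<subseteq> closure A"
    by (rule image_closure_subset[OF continuous_on_subset[OF rho_cont] closed_closure])
      (use assms(2) left_A in blast)+
  then show ?thesis using assms(1) by blast
qed

lemma id_S: "id \<in> closure A" by (rule subsetD[OF closure_subset idA])

lemma S_li: "left_ideal (closure A) (closure A)"
  unfolding left_ideal_def
proof (intro conjI ballI)
  show "closure A \<noteq> {}"
  proof
    assume "closure A = {}" with id_S show False by simp
  qed
  show "closure A \<subseteq> closure A" by (rule subset_refl)
  fix p q assume "p \<in> closure A" "q \<in> closure A" then show "p \<circ> q \<in> closure A" by (rule S_comp)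
qed

lemma Sq_li: assumes "q \<in> closure A" shows "left_ideal (closure A) ((\<lambda>p. p \<circ> q) ` closure A)"
  unfolding left_ideal_def
proof (intro conjI ballI)
  show "(\<lambda>p. p \<circ> q) ` closure A \<noteq> {}"
  proof
    assume "(\<lambda>p. p \<circ> q) ` closure A = {}" with id_S show False by simp
  qed
  show "(\<lambda>p. p \<circ> q) ` closure A \<subseteq> closure A" using S_comp assms by blast
  fix p r assume "p \<in> closure A" "r \<in> (\<lambda>p. p \<circ> q) ` closure A"
  then obtain s where "s \<in> closure A" "r = s \<circ> q" by blast
  then have "p \<circ> r = (p \<circ> s) \<circ> q" by (simp add: o_assoc)
  then show "p \<circ> r \<in> (\<lambda>p. p \<circ> q) ` closure A" using S_comp \<open>p \<in> closure A\<close> \<open>s \<in> closure A\<close> by blast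
qed

lemma Sq_closed: "closed ((\<lambda>p. p \<circ> q) ` closure A)"
  by (rule compact_fun_closed, rule compact_continuous_image[OF continuous_on_subset[OF rho_cont] compact_S]) simp

lemma li_Sq_sub: assumes "left_ideal (closure A) I" "q \<in> I" shows "(\<lambda>p. p \<circ> q) ` closure A \<subseteq> I"
  using assms(2) li_mul[OF assms(1)] by blast

lemma mli_eq: assumes "minimal_left_ideal (closure A) L" "q \<in> L" shows "L = (\<lambda>p. p \<circ> q) ` closure A"
proof -
  have q: "q \<in> closure A" using li_sub[OF mli_liD[OF assms(1)]] assms(2) by blast
  show ?thesis using mli_min[OF assms(1) Sq_li[OF q] li_Sq_sub[OF mli_liD[OF assms(1)] assms(2)]] by (rule sym)
qed

lemma mli_li: "minimal_left_ideal (closure A) L \<Longrightarrow> left_ideal (closure A) L"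
  unfolding minimal_left_ideal_def by blast

lemma mli_closed: assumes "minimal_left_ideal (closure A) L" shows "closed L"
proof -
  obtain q where "q \<in> L" using li_ne[OF mli_li[OF assms]] by blast
  then show ?thesis using mli_eq[OF assms] Sq_closed by metis
qed

lemma min_exists: assumes I: "left_ideal (closure A) I" shows "\<exists>L. minimal_left_ideal (closure A) L \<and> L \<subseteq> I"
proof -
  obtain q where q: "q \<in> I" using li_ne[OF I] by blast
  have qS: "q \<in> closure A" using li_sub[OF I] q by blast
  define F where "F = {L. closed L \<and> left_ideal (closure A) L \<and> L \<subseteq> (\<lambda>p. p \<circ> q) ` closure A}"
  have "\<exists>M\<in>F. \<forall>B\<in>F. B \<subseteq> M \<longrightarrow> B = M"
  proof (rule closed_Zorn_min[OF compact_S])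
    show "F \<noteq> {}" using Sq_li[OF qS] Sq_closed unfolding F_def by blast
    show "closed B \<and> B \<noteq> {} \<and> B \<subseteq> closure A" if "B \<in> F" for B
      using that unfolding F_def left_ideal_def by blast
    fix C assume C: "C \<noteq> {}" "C \<subseteq> F" "\<Inter>C \<noteq> {}"
    have "closed (\<Inter>C)" using C(2) unfolding F_def by auto
    moreover have "left_ideal (closure A) (\<Inter>C)"
      unfolding left_ideal_def
    proof (intro conjI ballI)
      show "\<Inter>C \<noteq> {}" by fact
      show "\<Inter>C \<subseteq> closure A" using C(1,2) unfolding F_def left_ideal_def by blast
      fix p r assume "p \<in> closure A" "r \<in> \<Inter>C"
      then show "p \<circ> r \<in> \<Inter>C" using C(2) unfolding F_def left_ideal_def by blast
    qed
    moreover have "\<Inter>C \<subseteq> (\<lambda>p. p \<circ> q) ` closure A" using C(1,2) unfolding F_def by blast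
    ultimately show "\<Inter>C \<in> F" unfolding F_def by blast
  qed
  then obtain M where M: "M \<in> F" "\<And>B. B \<in> F \<Longrightarrow> B \<subseteq> M \<Longrightarrow> B = M" by blast
  have "minimal_left_ideal (closure A) M"
    unfolding minimal_left_ideal_def
  proof (intro conjI allI impI)
    show "left_ideal (closure A) M" using M(1) unfolding F_def by blast
    fix J assume J: "left_ideal (closure A) J \<and> J \<subseteq> M"
    then have lJ: "left_ideal (closure A) J" by blast
    obtain r where r: "r \<in> J" using li_ne[OF lJ] by blast
    have rS: "r \<in> closure A" using li_sub[OF lJ] r by blast
    have sub: "(\<lambda>p. p \<circ> r) ` closure A \<subseteq> J" using li_Sq_sub J r by blast
    have "(\<lambda>p. p \<circ> r) ` closure A \<in> F"
      using Sq_closed Sq_li[OF rS] sub J M(1) unfolding F_def by blast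
    then have "(\<lambda>p. p \<circ> r) ` closure A = M" using M(2) sub J by blast
    then show "J = M" using sub J by blast
  qed
  moreover have "M \<subseteq> I" using M(1) li_Sq_sub[OF I q] unfolding F_def by blast
  ultimately show ?thesis by blast
qed

lemma mli_inter: assumes "minimal_left_ideal (closure A) L1" "minimal_left_ideal (closure A) L2" "L1 \<inter> L2 \<noteq> {}"
  shows "L1 = L2"
proof -
  have l1: "left_ideal (closure A) L1" and l2: "left_ideal (closure A) L2" using assms(1,2) by (simp_all add: mli_li)
  have "left_ideal (closure A) (L1 \<inter> L2)"
    unfolding left_ideal_def
  proof (intro conjI ballI)
    show "L1 \<inter> L2 \<noteq> {}" by (rule assms(3))
    show "L1 \<inter> L2 \<subseteq> closure A" using li_sub[OF l1] by blast
    fix p q assume "p \<in> closure A" "q \<in> L1 \<inter> L2"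
    then show "p \<circ> q \<in> L1 \<inter> L2" using li_mul[OF l1] li_mul[OF l2] by blast
  qed
  then have "L1 \<inter> L2 = L1" "L1 \<inter> L2 = L2" using mli_min[OF assms(1)] mli_min[OF assms(2)] by blast+
  then show ?thesis by blast
qed

lemma idem_closed:
  assumes Lc: "closed L" and Lne: "L \<noteq> {}" and LS: "L \<subseteq> closure A" and Lsg: "\<forall>x\<in>L. \<forall>y\<in>L. x \<circ> y \<in> L"
  shows "\<exists>u\<in>L. u \<circ> u = u"
proof -
  have cL: "compact L" using compact_Int_closed[OF compact_S Lc] LS by (simp add: Int_absorb1)
  define F where "F = {B. closed B \<and> B \<noteq> {} \<and> B \<subseteq> L \<and> (\<forall>x\<in>B. \<forall>y\<in>B. x \<circ> y \<in> B)}"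
  have "\<exists>M\<in>F. \<forall>B\<in>F. B \<subseteq> M \<longrightarrow> B = M"
  proof (rule closed_Zorn_min[OF cL])
    have "L \<in> F" using Lc Lne Lsg unfolding F_def by blast
    then show "F \<noteq> {}" by blast
    show "closed B \<and> B \<noteq> {} \<and> B \<subseteq> L" if "B \<in> F" for B using that unfolding F_def by blast
    fix C assume C: "C \<noteq> {}" "C \<subseteq> F" "\<Inter>C \<noteq> {}"
    have "closed (\<Inter>C)" using C(2) unfolding F_def by auto
    moreover have "\<Inter>C \<subseteq> L" using C(1,2) unfolding F_def by blast
    moreover have "\<forall>x\<in>\<Inter>C. \<forall>y\<in>\<Inter>C. x \<circ> y \<in> \<Inter>C" using C(2) unfolding F_def by blast
    ultimately show "\<Inter>C \<in> F" using C(3) unfolding F_def by blast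
  qed
  then obtain M where M: "M \<in> F" "\<And>B. B \<in> F \<Longrightarrow> B \<subseteq> M \<Longrightarrow> B = M" by blast
  have Mc: "closed M" "M \<noteq> {}" "M \<subseteq> L" and Ms: "\<And>x y. x \<in> M \<Longrightarrow> y \<in> M \<Longrightarrow> x \<circ> y \<in> M"
    using M(1) unfolding F_def by blast+
  obtain a where a: "a \<in> M" using Mc by blast
  have cM: "compact M" using compact_Int_closed[OF cL Mc(1)] Mc(3) by (simp add: Int_absorb1)
  have "(\<lambda>p. p \<circ> a) ` M \<in> F"
    unfolding F_def
  proof (intro CollectI conjI ballI)
    show "closed ((\<lambda>p. p \<circ> a) ` M)"
      by (rule compact_fun_closed, rule compact_continuous_image[OF continuous_on_subset[OF rho_cont] cM]) simp
    show "(\<lambda>p. p \<circ> a) ` M \<noteq> {}" using a by blast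
    show "(\<lambda>p. p \<circ> a) ` M \<subseteq> L" using Ms a Mc(3) by blast
    fix x y assume "x \<in> (\<lambda>p. p \<circ> a) ` M" "y \<in> (\<lambda>p. p \<circ> a) ` M"
    then obtain x' y' where xy: "x' \<in> M" "y' \<in> M" "x = x' \<circ> a" "y = y' \<circ> a" by blast
    then have "x \<circ> y = (x' \<circ> a \<circ> y') \<circ> a" by (simp add: o_assoc)
    moreover have "x' \<circ> a \<circ> y' \<in> M" using Ms xy a by blast
    ultimately show "x \<circ> y \<in> (\<lambda>p. p \<circ> a) ` M" by blast
  qed
  moreover have "(\<lambda>p. p \<circ> a) ` M \<subseteq> M" using Ms a by blast
  ultimately have Ma: "(\<lambda>p. p \<circ> a) ` M = M" using M(2) by blast
  then obtain b where b: "b \<in> M" "b \<circ> a = a" using a by (metis imageE)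
  define B where "B = {x \<in> M. x \<circ> a = a}"
  have "B \<in> F"
    unfolding F_def
  proof (intro CollectI conjI ballI)
    have "closed {x. x \<circ> a = (\<lambda>x. a) x}"
      by (rule closed_fun_eq) (simp_all add: o_def)
    moreover have "B = M \<inter> {x. x \<circ> a = (\<lambda>x. a) x}" unfolding B_def by blast
    ultimately show "closed B" using Mc(1) by (simp add: closed_Int)
    show "B \<noteq> {}" using b unfolding B_def by blast
    show "B \<subseteq> L" using Mc(3) unfolding B_def by blast
    fix x y assume "x \<in> B" "y \<in> B"
    then show "x \<circ> y \<in> B" unfolding B_def using Ms by (simp add: comp_assoc)
  qed
  moreover have "B \<subseteq> M" unfolding B_def by blast
  ultimately have "B = M" using M(2) by blast
  then have "a \<circ> a = a" using a unfolding B_def by blast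
  then show ?thesis using a Mc(3) by blast
qed


lemma idem_exists: assumes L: "minimal_left_ideal (closure A) L" shows "\<exists>u\<in>L. u \<circ> u = u"
proof (rule idem_closed[OF mli_closed[OF L] li_ne[OF mli_liD[OF L]] li_sub[OF mli_liD[OF L]]])
  show "\<forall>x\<in>L. \<forall>y\<in>L. x \<circ> y \<in> L" using li_mul[OF mli_liD[OF L]] li_sub[OF mli_liD[OF L]] by blast
qed

lemma PR_fix:
  assumes p: "p \<in> closure A" "p a = p b" and L: "minimal_left_ideal (closure A) L"
    and v: "v \<in> L" "v a = a" "v b = b"
  shows "a = b"
proof -
  have vS: "v \<in> closure A" using li_sub[OF mli_liD[OF L]] v(1) by blast
  have pv: "p \<circ> v \<in> closure A" by (rule S_comp[OF p(1) vS])
  have "(\<lambda>q. q \<circ> (p \<circ> v)) ` closure A \<subseteq> L"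
  proof
    fix x assume "x \<in> (\<lambda>q. q \<circ> (p \<circ> v)) ` closure A"
    then obtain q where q: "q \<in> closure A" "x = q \<circ> (p \<circ> v)" by blast
    have "q \<circ> p \<in> closure A" by (rule S_comp[OF q(1) p(1)])
    then have "(q \<circ> p) \<circ> v \<in> L" by (rule li_mul[OF mli_liD[OF L] _ v(1)])
    then show "x \<in> L" using q(2) by (simp add: comp_assoc)
  qed
  then have eq: "(\<lambda>q. q \<circ> (p \<circ> v)) ` closure A = L" by (rule mli_min[OF L Sq_li[OF pv]])
  have "v \<in> (\<lambda>q. q \<circ> (p \<circ> v)) ` closure A" unfolding eq by (rule v(1))
  then obtain q where q: "v = q \<circ> (p \<circ> v)" by (rule imageE) (rule that)
  have "a = v a" using v(2) by (rule sym)
  also have "\<dots> = (q \<circ> (p \<circ> v)) a" using q by (rule fun_cong)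
  also have "\<dots> = q (p a)" using v(2) by simp
  also have "\<dots> = q (p b)" using p(2) by simp
  also have "\<dots> = (q \<circ> (p \<circ> v)) b" using v(3) by simp
  also have "\<dots> = v b" using q[symmetric] by (rule fun_cong)
  also have "\<dots> = b" by (rule v(3))
  finally show ?thesis .
qed

lemma PR_uniq:
  assumes p: "p \<in> closure A" "p a = p b" and L: "minimal_left_ideal (closure A) L"
    and uniq: "\<And>L'. minimal_left_ideal (closure A) L' \<Longrightarrow> L' = L" and s: "s \<in> L"
  shows "s a = s b"
proof -
  obtain L0 where L0: "minimal_left_ideal (closure A) L0" "L0 \<subseteq> (\<lambda>q. q \<circ> p) ` closure A"
    using min_exists[OF Sq_li[OF p(1)]] by blast
  have "L0 = L" by (rule uniq[OF L0(1)])
  then have "s \<in> (\<lambda>q. q \<circ> p) ` closure A" using L0(2) s by blast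
  then obtain q where q: "s = q \<circ> p" by (rule imageE) (rule that)
  show ?thesis using q p(2) by simp
qed

lemma trans_unique:
  assumes tr: "\<And>a b c. (\<exists>p\<in>closure A. p a = p b) \<Longrightarrow> (\<exists>p\<in>closure A. p b = p c) \<Longrightarrow> (\<exists>p\<in>closure A. p a = p c)"
    and L1: "minimal_left_ideal (closure A) L1" and L2: "minimal_left_ideal (closure A) L2"
  shows "L1 = L2"
proof -
  obtain u where u: "u \<in> L1" "u \<circ> u = u" using idem_exists[OF L1] by blast
  have uS: "u \<in> closure A" using li_sub[OF mli_liD[OF L1]] u(1) by blast
  have L2S: "L2 \<subseteq> closure A" by (rule li_sub[OF mli_liD[OF L2]])
  have L2ne: "L2 \<noteq> {}" by (rule li_ne[OF mli_liD[OF L2]])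
  have "(\<lambda>l. l \<circ> u) ` L2 \<subseteq> L1"
    using li_mul[OF mli_liD[OF L1] _ u(1)] L2S by blast
  moreover have "left_ideal (closure A) ((\<lambda>l. l \<circ> u) ` L2)"
  proof (rule left_idealI)
    show "(\<lambda>l. l \<circ> u) ` L2 \<noteq> {}" using L2ne by simp
    show "(\<lambda>l. l \<circ> u) ` L2 \<subseteq> closure A" using S_comp[OF _ uS] L2S by blast
    fix q r assume q: "q \<in> closure A" and "r \<in> (\<lambda>l. l \<circ> u) ` L2"
    then obtain l where l: "l \<in> L2" "r = l \<circ> u" by blast
    have "q \<circ> l \<in> L2" by (rule li_mul[OF mli_liD[OF L2] q l(1)])
    moreover have "q \<circ> r = (q \<circ> l) \<circ> u" using l(2) by (simp add: o_assoc)
    ultimately show "q \<circ> r \<in> (\<lambda>l. l \<circ> u) ` L2" by blast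
  qed
  ultimately have "(\<lambda>l. l \<circ> u) ` L2 = L1" using mli_min[OF L1] by blast
  then have "u \<in> (\<lambda>l. l \<circ> u) ` L2" using u(1) by simp
  then obtain l0 where l0: "l0 \<in> L2" "l0 \<circ> u = u" by (metis imageE)
  define K where "K = {l \<in> L2. l \<circ> u = u}"
  have "closed {l. l \<circ> u = (\<lambda>l. u) l}"
    by (rule closed_fun_eq) (simp_all add: o_def)
  moreover have "K = L2 \<inter> {l. l \<circ> u = (\<lambda>l. u) l}" unfolding K_def by blast
  ultimately have Kc: "closed K" using mli_closed[OF L2] by (simp add: closed_Int)
  have Kne: "K \<noteq> {}" using l0 unfolding K_def by blast
  have KS: "K \<subseteq> closure A" using L2S unfolding K_def by blast
  have Ksg: "\<forall>x\<in>K. \<forall>y\<in>K. x \<circ> y \<in> K"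
  proof (intro ballI)
    fix x y assume x: "x \<in> K" and y: "y \<in> K"
    have "x \<circ> y \<in> L2" using li_mul[OF mli_liD[OF L2]] x y L2S unfolding K_def by blast
    moreover have "(x \<circ> y) \<circ> u = u" using x y unfolding K_def by (simp add: comp_assoc)
    ultimately show "x \<circ> y \<in> K" unfolding K_def by blast
  qed
  obtain v where v: "v \<in> K" "v \<circ> v = v" using idem_closed[OF Kc Kne KS Ksg] by blast
  have vL2: "v \<in> L2" and vu: "v \<circ> u = u" using v(1) unfolding K_def by blast+
  have vS: "v \<in> closure A" using L2S vL2 by blast
  have uv: "u x = v x" for x
  proof -
    have "u (u x) = u x" using u(2) by (metis comp_apply)
    then have 1: "\<exists>p\<in>closure A. p (u x) = p x" using uS by blast
    have "v x = v (v x)" using v(2) by (metis comp_apply)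
    then have 2: "\<exists>p\<in>closure A. p x = p (v x)" using vS by blast
    obtain p where p: "p \<in> closure A" "p (u x) = p (v x)" using tr[OF 1 2] by blast
    have f1: "v (u x) = u x" using vu by (metis comp_apply)
    have f2: "v (v x) = v x" using v(2) by (metis comp_apply)
    show ?thesis by (rule PR_fix[OF p L2 vL2 f1 f2])
  qed
  then have "u = v" by (rule ext)
  then have "u \<in> L1 \<inter> L2" using u(1) vL2 by simp
  then show ?thesis using mli_inter[OF L1 L2] by blast
qed

lemma unique_trans:
  assumes L: "minimal_left_ideal (closure A) L"
    and uniq: "\<And>L'. minimal_left_ideal (closure A) L' \<Longrightarrow> L' = L"
    and ab: "\<exists>p\<in>closure A. p a = p b" and bc: "\<exists>p\<in>closure A. p b = p c"
  shows "\<exists>p\<in>closure A. p a = p c"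
proof -
  obtain s where s: "s \<in> L" using li_ne[OF mli_liD[OF L]] by blast
  have sS: "s \<in> closure A" using li_sub[OF mli_liD[OF L]] s by blast
  obtain p where p: "p \<in> closure A" "p a = p b" using ab by blast
  obtain p' where p': "p' \<in> closure A" "p' b = p' c" using bc by blast
  have "s a = s b" by (rule PR_uniq[OF p L uniq s])
  moreover have "s b = s c" by (rule PR_uniq[OF p' L uniq s])
  ultimately show ?thesis using sS by auto
qed

lemma L_two_sided:
  assumes L: "minimal_left_ideal (closure A) L"
    and uniq: "\<And>L'. minimal_left_ideal (closure A) L' \<Longrightarrow> L' = L"
    and l: "l \<in> L" and q: "q \<in> closure A"
  shows "l \<circ> q \<in> L"
proof -
  have LS: "L \<subseteq> closure A" by (rule li_sub[OF mli_liD[OF L]])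
  let ?Lq = "(\<lambda>l. l \<circ> q) ` L"
  have li: "left_ideal (closure A) ?Lq"
    unfolding left_ideal_def
  proof (intro conjI ballI)
    show "?Lq \<noteq> {}" using l by blast
    show "?Lq \<subseteq> closure A" using LS q S_comp by blast
    fix p r assume p: "p \<in> closure A" and "r \<in> ?Lq"
    then obtain l' where l': "l' \<in> L" "r = l' \<circ> q" by blast
    have "p \<circ> l' \<in> L" by (rule li_mul[OF mli_li[OF L] p l'(1)])
    moreover have "p \<circ> r = (p \<circ> l') \<circ> q" using l'(2) by (simp add: o_assoc)
    ultimately show "p \<circ> r \<in> ?Lq" by blast
  qed
  have "minimal_left_ideal (closure A) ?Lq"
    unfolding minimal_left_ideal_def
  proof (intro conjI allI impI)
    show "left_ideal (closure A) ?Lq" by (rule li)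
    fix J assume J: "left_ideal (closure A) J \<and> J \<subseteq> ?Lq"
    define K where "K = {l' \<in> L. l' \<circ> q \<in> J}"
    have "left_ideal (closure A) K"
      unfolding left_ideal_def
    proof (intro conjI ballI)
      have lJ: "left_ideal (closure A) J" using J by blast
      obtain j where "j \<in> J" using li_ne[OF lJ] by blast
      then obtain l' where "l' \<in> L" "j = l' \<circ> q" using J by blast
      then show "K \<noteq> {}" unfolding K_def using \<open>j \<in> J\<close> by blast
      show "K \<subseteq> closure A" unfolding K_def using LS by blast
      fix p r assume p: "p \<in> closure A" and r: "r \<in> K"
      have "p \<circ> r \<in> L" using mli_li[OF L] p r unfolding left_ideal_def K_def by blast
      moreover have "p \<circ> (r \<circ> q) \<in> J" using J p r unfolding left_ideal_def K_def by blast
      ultimately show "p \<circ> r \<in> K" unfolding K_def by (simp add: o_assoc)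
    qed
    moreover have "K \<subseteq> L" unfolding K_def by blast
    ultimately have "K = L" by (rule mli_min[OF L])
    then have "?Lq \<subseteq> J" unfolding K_def by blast
    then show "J = ?Lq" using J by blast
  qed
  then have "?Lq = L" by (rule uniq)
  then show ?thesis using l by blast
qed

lemma unique_kernel:
  assumes L: "minimal_left_ideal (closure A) L"
    and uniq: "\<And>L'. minimal_left_ideal (closure A) L' \<Longrightarrow> L' = L"
  shows "kernel (closure A) = L"
proof -
  have LS: "L \<subseteq> closure A" by (rule li_sub[OF mli_liD[OF L]])
  have Lne: "L \<noteq> {}" by (rule li_ne[OF mli_liD[OF L]])
  have ts: "two_sided_ideal (closure A) L"
  proof (rule two_sidedI[OF Lne LS])
    fix p q assume p: "p \<in> closure A" and q: "q \<in> L"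
    show "p \<circ> q \<in> L \<and> q \<circ> p \<in> L"
      using li_mul[OF mli_liD[OF L] p q] L_two_sided[OF L uniq q p] by blast
  qed
  have mts: "minimal_two_sided_ideal (closure A) L"
    unfolding minimal_two_sided_ideal_def
  proof (intro conjI allI impI)
    show "two_sided_ideal (closure A) L" by (rule ts)
    fix J assume J: "two_sided_ideal (closure A) J \<and> J \<subseteq> L"
    then have "left_ideal (closure A) J" using ts_li by blast
    then show "J = L" using mli_min[OF L] J by blast
  qed
  have "I = L" if I: "minimal_two_sided_ideal (closure A) I" for I
  proof -
    have tsI: "two_sided_ideal (closure A) I" by (rule mts_ts[OF I])
    obtain i where i: "i \<in> I" using ts_ne[OF tsI] by blast
    obtain l where l: "l \<in> L" using Lne by blast
    have iS: "i \<in> closure A" using ts_sub[OF tsI] i by blast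
    have lS: "l \<in> closure A" using LS l by blast
    have "l \<circ> i \<in> I" by (rule ts_l[OF tsI lS i])
    moreover have "l \<circ> i \<in> L" by (rule ts_r[OF ts iS l])
    ultimately have ne: "L \<inter> I \<noteq> {}" by blast
    have "two_sided_ideal (closure A) (L \<inter> I)"
    proof (rule two_sidedI[OF ne])
      show "L \<inter> I \<subseteq> closure A" using LS by blast
      fix p q assume p: "p \<in> closure A" and q: "q \<in> L \<inter> I"
      then have qL: "q \<in> L" and qI: "q \<in> I" by blast+
      show "p \<circ> q \<in> L \<inter> I \<and> q \<circ> p \<in> L \<inter> I"
        using ts_l[OF ts p qL] ts_r[OF ts p qL] ts_l[OF tsI p qI] ts_r[OF tsI p qI] by blast
    qed
    then have "L \<inter> I = I" "L \<inter> I = L" using mts_min[OF I] mts_min[OF mts] by blast+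
    then show ?thesis by blast
  qed
  then show ?thesis unfolding kernel_def using mts by (intro the_equality) blast+
qed

lemma unique_minidem:
  assumes L: "minimal_left_ideal (closure A) L"
    and uniq: "\<And>L'. minimal_left_ideal (closure A) L' \<Longrightarrow> L' = L"
  shows "minimal_idempotents (closure A) = {p \<in> L. p \<circ> p = p}"
proof -
  have LS: "L \<subseteq> closure A" by (rule li_sub[OF mli_liD[OF L]])
  show ?thesis
  proof (intro equalityI subsetI)
    fix p assume p: "p \<in> minimal_idempotents (closure A)"
    then have pS: "p \<in> closure A" and pp: "p \<circ> p = p"
      and pmin: "\<And>q. q \<in> closure A \<Longrightarrow> q \<circ> q = q \<Longrightarrow> idem_le q p \<Longrightarrow> q = p"
      unfolding minimal_idempotents_def by blast+
    let ?Lp = "(\<lambda>l. l \<circ> p) ` L"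
    have "left_ideal (closure A) ?Lp"
      unfolding left_ideal_def
    proof (intro conjI ballI)
      show "?Lp \<noteq> {}" using li_ne[OF mli_liD[OF L]] by blast
      show "?Lp \<subseteq> closure A" using LS pS S_comp by blast
      fix r s assume r: "r \<in> closure A" and "s \<in> ?Lp"
      then obtain l where l: "l \<in> L" "s = l \<circ> p" by blast
      have "r \<circ> l \<in> L" by (rule li_mul[OF mli_li[OF L] r l(1)])
      moreover have "r \<circ> s = (r \<circ> l) \<circ> p" using l(2) by (simp add: o_assoc)
      ultimately show "r \<circ> s \<in> ?Lp" by blast
    qed
    moreover have "?Lp \<subseteq> L" using L_two_sided[OF L uniq] pS by blast
    ultimately have Lp: "?Lp = L" by (rule mli_min[OF L])
    obtain e where e: "e \<in> L" "e \<circ> e = e" using idem_exists[OF L] by blast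
    obtain e' where e': "e' \<in> L" "e = e' \<circ> p" using e(1) Lp by blast
    have ep: "e \<circ> p = e" using e'(2) pp by (simp add: comp_assoc)
    define q where "q = p \<circ> e"
    have qL: "q \<in> L" unfolding q_def by (rule li_mul[OF mli_li[OF L] pS e(1)])
    have "q \<circ> q = q" unfolding q_def
      by (metis e(2) ep o_assoc)
    moreover have "idem_le q p" unfolding idem_le_def q_def
      by (metis ep pp o_assoc)
    ultimately have "q = p" using pmin qL LS by blast
    then show "p \<in> {p \<in> L. p \<circ> p = p}" using qL pp by blast
  next
    fix p assume p: "p \<in> {p \<in> L. p \<circ> p = p}"
    then have pL: "p \<in> L" and pp: "p \<circ> p = p" by blast+
    have "q = p" if q: "q \<in> closure A" "q \<circ> q = q" "idem_le q p" for q
    proof -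
      have qe: "q = q \<circ> p" "q = p \<circ> q" using q(3) unfolding idem_le_def by blast+
      have "q \<circ> p \<in> L" by (rule li_mul[OF mli_li[OF L] q(1) pL])
      then have qL: "q \<in> L" by (simp only: qe(1)[symmetric])
      have "p \<in> (\<lambda>r. r \<circ> q) ` closure A" using pL by (simp only: mli_eq[OF L qL, symmetric])
      then obtain r where r: "p = r \<circ> q" by (rule imageE) (rule that)
      have "p \<circ> q = (r \<circ> q) \<circ> q" by (simp only: r)
      also have "\<dots> = r \<circ> q" using q(2) by (simp add: comp_assoc)
      also have "\<dots> = p" using r by (rule sym)
      finally have "p \<circ> q = p" .
      with qe(2) show ?thesis by (rule trans)
    qed
    then show "p \<in> minimal_idempotents (closure A)"
      unfolding minimal_idempotents_def using pL pp LS by blast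
  qed
qed

end


lemma envsg_half:
  fixes \<alpha> :: "real \<Rightarrow> 'a::metric_space \<Rightarrow> 'a"
  assumes cpt: "compact (UNIV::'a set)"
    and zero: "\<alpha> 0 = id"
    and add: "\<And>s t. s \<in> T \<Longrightarrow> t \<in> T \<Longrightarrow> \<alpha> (s + t) = \<alpha> s \<circ> \<alpha> t"
    and cont: "\<And>t. t \<in> T \<Longrightarrow> continuous_on UNIV (\<alpha> t)"
    and T'T: "T' \<subseteq> T" and T'0: "0 \<in> T'" and T'add: "\<And>s t. s \<in> T' \<Longrightarrow> t \<in> T' \<Longrightarrow> s + t \<in> T'"
  shows "envsg (\<alpha> ` T')"
proof (unfold_locales)
  show "compact (UNIV::'a set)" by (rule cpt)
next
  fix f assume "f \<in> \<alpha> ` T'"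
  then obtain t where t: "t \<in> T'" "f = \<alpha> t" by blast
  then show "continuous_on UNIV f" using cont T'T by blast
next
  have "\<alpha> 0 \<in> \<alpha> ` T'" using T'0 by (rule imageI)
  then show "id \<in> \<alpha> ` T'" using zero by simp
next
  fix f g assume "f \<in> \<alpha> ` T'" "g \<in> \<alpha> ` T'"
  then obtain s t where st: "s \<in> T'" "t \<in> T'" "f = \<alpha> s" "g = \<alpha> t" by blast
  have "\<alpha> (s + t) \<in> \<alpha> ` T'" using T'add[OF st(1,2)] by (rule imageI)
  moreover have "\<alpha> (s + t) = f \<circ> g" using add[of s t] st T'T by blast
  ultimately show "f \<circ> g \<in> \<alpha> ` T'" by simp
qed

lemma half_mli_E:
  fixes \<alpha> :: "real \<Rightarrow> 'a::metric_space \<Rightarrow> 'a"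
  assumes cpt: "compact (UNIV::'a set)"
    and zero: "\<alpha> 0 = id"
    and add: "\<And>s t. s \<in> T \<Longrightarrow> t \<in> T \<Longrightarrow> \<alpha> (s + t) = \<alpha> s \<circ> \<alpha> t"
    and cont: "\<And>t. t \<in> T \<Longrightarrow> continuous_on UNIV (\<alpha> t)"
    and T0: "0 \<in> T" and Tadd: "\<And>s t. s \<in> T \<Longrightarrow> t \<in> T \<Longrightarrow> s + t \<in> T"
    and Tneg: "\<And>s. s \<in> T \<Longrightarrow> - s \<in> T"
    and T'T: "T' \<subseteq> T" and T'0: "0 \<in> T'" and T'add: "\<And>s t. s \<in> T' \<Longrightarrow> t \<in> T' \<Longrightarrow> s + t \<in> T'"
    and split: "\<And>t. t \<in> T \<Longrightarrow> t \<in> T' \<or> - t \<in> T'"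
    and L: "minimal_left_ideal (closure (\<alpha> ` T')) L"
  shows "minimal_left_ideal (closure (\<alpha> ` T)) L"
proof -
  interpret P: envsg "\<alpha> ` T'" by (rule envsg_half[OF cpt zero add cont T'T T'0 T'add])
  interpret F: envsg "\<alpha> ` T" by (rule envsg_half[OF cpt zero add cont subset_refl T0 Tadd])
  have sub: "closure (\<alpha> ` T') \<subseteq> closure (\<alpha> ` T)" using T'T by (intro closure_mono image_mono)
  have LS: "L \<subseteq> closure (\<alpha> ` T')" by (rule li_sub[OF mli_liD[OF L]])
  have Lne: "L \<noteq> {}" by (rule li_ne[OF mli_liD[OF L]])
  have Lli: "\<And>q l. q \<in> closure (\<alpha> ` T') \<Longrightarrow> l \<in> L \<Longrightarrow> q \<circ> l \<in> L"
    by (rule li_mul[OF mli_liD[OF L]])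
  have comm: "p \<circ> \<alpha> s = \<alpha> s \<circ> p" if s: "s \<in> T" and p: "p \<in> closure (\<alpha> ` T)" for s p
  proof -
    have cl: "closed {p. p \<circ> \<alpha> s = \<alpha> s \<circ> p}"
    proof (rule closed_fun_eq)
      fix y
      show "continuous_on UNIV (\<lambda>p. (p \<circ> \<alpha> s) y)" by (simp add: o_def)
      show "continuous_on UNIV (\<lambda>p. (\<alpha> s \<circ> p) y)" unfolding o_def
        by (rule continuous_on_compose2[OF cont[OF s] continuous_on_product_coordinates]) simp
    qed
    have "\<alpha> ` T \<subseteq> {p. p \<circ> \<alpha> s = \<alpha> s \<circ> p}"
    proof
      fix f assume "f \<in> \<alpha> ` T"
      then obtain t where t: "t \<in> T" "f = \<alpha> t" by blast
      have "\<alpha> t \<circ> \<alpha> s = \<alpha> (t + s)" using add[OF t(1) s] by simp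
      also have "\<dots> = \<alpha> (s + t)" by (simp add: add.commute)
      also have "\<dots> = \<alpha> s \<circ> \<alpha> t" using add[OF s t(1)] by simp
      finally show "f \<in> {p. p \<circ> \<alpha> s = \<alpha> s \<circ> p}" using t(2) by simp
    qed
    then have "closure (\<alpha> ` T) \<subseteq> {p. p \<circ> \<alpha> s = \<alpha> s \<circ> p}" by (rule closure_minimal[OF _ cl])
    then show ?thesis using p by blast
  qed
  have shift: "(\<lambda>p. \<alpha> s \<circ> p) ` L = L" if s: "s \<in> T'" for s
  proof -
    have sT: "s \<in> T" using s T'T by blast
    have aS: "\<alpha> s \<in> closure (\<alpha> ` T')" by (rule subsetD[OF closure_subset imageI[OF s]])
    have "left_ideal (closure (\<alpha> ` T')) ((\<lambda>p. \<alpha> s \<circ> p) ` L)"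
      unfolding left_ideal_def
    proof (intro conjI ballI)
      show "(\<lambda>p. \<alpha> s \<circ> p) ` L \<noteq> {}" using Lne by blast
      show "(\<lambda>p. \<alpha> s \<circ> p) ` L \<subseteq> closure (\<alpha> ` T')" using Lli[OF aS] LS by blast
      fix q r assume q: "q \<in> closure (\<alpha> ` T')" and "r \<in> (\<lambda>p. \<alpha> s \<circ> p) ` L"
      then obtain l where l: "l \<in> L" "r = \<alpha> s \<circ> l" by blast
      have "q \<circ> r = (q \<circ> \<alpha> s) \<circ> l" using l(2) by (simp add: o_assoc)
      also have "\<dots> = \<alpha> s \<circ> (q \<circ> l)" using comm[OF sT] q sub by (simp add: o_assoc subset_iff)
      finally show "q \<circ> r \<in> (\<lambda>p. \<alpha> s \<circ> p) ` L" using Lli[OF q l(1)] by blast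
    qed
    moreover have "(\<lambda>p. \<alpha> s \<circ> p) ` L \<subseteq> L" using Lli[OF aS] by blast
    ultimately show ?thesis by (rule mli_min[OF L])
  qed
  have stepT: "\<alpha> t \<circ> l \<in> L" if t: "t \<in> T" and l: "l \<in> L" for t l
  proof (cases "t \<in> T'")
    case True
    have "\<alpha> t \<in> closure (\<alpha> ` T')" by (rule subsetD[OF closure_subset imageI[OF True]])
    then show ?thesis using Lli l by blast
  next
    case False
    then have mt: "- t \<in> T'" using split t by blast
    obtain l' where l': "l' \<in> L" "l = \<alpha> (- t) \<circ> l'" using shift[OF mt] l by blast
    have "\<alpha> t \<circ> \<alpha> (- t) = \<alpha> (t + - t)" using add[OF t Tneg[OF t]] by simp
    also have "\<dots> = id" using zero by simp
    finally have "\<alpha> t \<circ> l = l'" using l'(2) by (simp add: o_assoc)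
    then show ?thesis using l'(1) by simp
  qed
  have stepE: "e \<circ> l \<in> L" if e: "e \<in> closure (\<alpha> ` T)" and l: "l \<in> L" for e l
  proof -
    have "(\<lambda>e. e \<circ> l) ` closure (\<alpha> ` T) \<subseteq> L"
      by (rule image_closure_subset[OF continuous_on_subset[OF F.rho_cont] P.mli_closed[OF L]])
        (use stepT l in blast)+
    then show ?thesis using e by blast
  qed
  have li: "left_ideal (closure (\<alpha> ` T)) L"
  proof (rule left_idealI[OF Lne])
    show "L \<subseteq> closure (\<alpha> ` T)" using LS sub by (rule order_trans)
    fix p q assume "p \<in> closure (\<alpha> ` T)" "q \<in> L"
    then show "p \<circ> q \<in> L" by (rule stepE)
  qed
  show ?thesis
    unfolding minimal_left_ideal_def
  proof (intro conjI allI impI)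
    show "left_ideal (closure (\<alpha> ` T)) L" by (rule li)
    fix J assume J: "left_ideal (closure (\<alpha> ` T)) J \<and> J \<subseteq> L"
    then have lJ: "left_ideal (closure (\<alpha> ` T)) J" by blast
    have lJ': "left_ideal (closure (\<alpha> ` T')) J"
    proof (rule left_idealI)
      show "J \<noteq> {}" by (rule li_ne[OF lJ])
      show "J \<subseteq> closure (\<alpha> ` T')" using J LS by blast
      fix p q assume "p \<in> closure (\<alpha> ` T')" "q \<in> J"
      then show "p \<circ> q \<in> J" using li_mul[OF lJ] sub by blast
    qed
    show "J = L" using mli_min[OF L lJ'] J by blast
  qed
qed

theorem theorem3p9:
  fixes \<alpha> :: "real \<Rightarrow> 'a::metric_space \<Rightarrow> 'a" and T :: "real set"
  assumes cpt: "compact (UNIV :: 'a set)"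
    and T: "T = \<int> \<or> T = UNIV"
    and zero: "\<alpha> 0 = id"
    and add: "\<forall>s\<in>T. \<forall>t\<in>T. \<alpha> (s + t) = \<alpha> s \<circ> \<alpha> t"
    and homeo: "\<forall>t\<in>T. \<exists>g. homeomorphism UNIV UNIV (\<alpha> t) g"
    and fwd: "transitive_rel (proximal_on \<alpha> {t\<in>T. t \<ge> 0})"
    and bwd: "transitive_rel (proximal_on \<alpha> {t\<in>T. t \<le> 0})"
  shows
    "let E = enveloping \<alpha> T;
         Ep = enveloping \<alpha> {t\<in>T. t \<ge> 0};
         Em = enveloping \<alpha> {t\<in>T. t \<le> 0};
         M = kernel E; Mp = kernel Ep; Mm = kernel Em;
         Jp = minimal_idempotents Ep; Jm = minimal_idempotents Em;
         c1i = transitive_rel (proximal_on \<alpha> T);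
         c1ii = (\<exists>!I. minimal_left_ideal E I);
         c1iii = (M = Mp \<and> Mp = Mm);
         c1iv = (Jp = Jm);
         c2i = (\<not> transitive_rel (proximal_on \<alpha> T));
         c2ii = ({I. minimal_left_ideal E I} = {Mp, Mm} \<and> Mp \<noteq> Mm);
         c2iii = (Mp \<inter> Mm = {});
         c2iv = (Jp \<inter> Jm = {});
         case1 = (c1i \<and> c1ii \<and> c1iii \<and> c1iv);
         case2 = (c2i \<and> c2ii \<and> c2iii \<and> c2iv)
     in (c1i \<longleftrightarrow> c1ii) \<and> (c1i \<longleftrightarrow> c1iii) \<and> (c1i \<longleftrightarrow> c1iv)
      \<and> (c2i \<longleftrightarrow> c2ii) \<and> (c2i \<longleftrightarrow> c2iii) \<and> (c2i \<longleftrightarrow> c2iv)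
      \<and> (case1 \<noteq> case2)"
proof -
  have T0: "0 \<in> T" using T by auto
  have Tadd: "s + t \<in> T" if "s \<in> T" "t \<in> T" for s t using T that by (auto intro: Ints_add)
  have Tneg: "- s \<in> T" if "s \<in> T" for s using T that by (auto intro: Ints_minus)
  have addT: "\<alpha> (s + t) = \<alpha> s \<circ> \<alpha> t" if "s \<in> T" "t \<in> T" for s t using add that by blast
  have cont: "continuous_on UNIV (\<alpha> t)" if "t \<in> T" for t
    using homeo that unfolding homeomorphism_def by blast
  define Tp where "Tp = {t\<in>T. t \<ge> 0}"
  define Tm where "Tm = {t\<in>T. t \<le> 0}"
  have Tp0: "0 \<in> Tp" using T0 unfolding Tp_def by simp
  have Tm0: "0 \<in> Tm" using T0 unfolding Tm_def by simp
  have TpT: "Tp \<subseteq> T" and TmT: "Tm \<subseteq> T" unfolding Tp_def Tm_def by blast+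
  have Tpadd: "s + t \<in> Tp" if "s \<in> Tp" "t \<in> Tp" for s t using that Tadd unfolding Tp_def by simp
  have Tmadd: "s + t \<in> Tm" if "s \<in> Tm" "t \<in> Tm" for s t using that Tadd unfolding Tm_def by simp
  have splitp: "t \<in> Tp \<or> - t \<in> Tp" if "t \<in> T" for t using that Tneg unfolding Tp_def by auto
  have splitm: "t \<in> Tm \<or> - t \<in> Tm" if "t \<in> T" for t using that Tneg unfolding Tm_def by auto
  have TUn: "T = Tp \<union> Tm" unfolding Tp_def Tm_def by auto
  interpret P: envsg "\<alpha> ` Tp" by (rule envsg_half[OF cpt zero addT cont TpT Tp0 Tpadd])
  interpret M: envsg "\<alpha> ` Tm" by (rule envsg_half[OF cpt zero addT cont TmT Tm0 Tmadd])
  interpret F: envsg "\<alpha> ` T" by (rule envsg_half[OF cpt zero addT cont subset_refl T0 Tadd])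
  have EUn: "closure (\<alpha> ` T) = closure (\<alpha> ` Tp) \<union> closure (\<alpha> ` Tm)"
    by (simp add: TUn image_Un closure_Un)
  have proxP: "proximal_on \<alpha> Tp x y \<longleftrightarrow> (\<exists>p\<in>closure (\<alpha> ` Tp). p x = p y)" for x y
    by (rule prox_iff[OF P.compact_S]) (use Tp0 in blast)
  have proxM: "proximal_on \<alpha> Tm x y \<longleftrightarrow> (\<exists>p\<in>closure (\<alpha> ` Tm). p x = p y)" for x y
    by (rule prox_iff[OF M.compact_S]) (use Tm0 in blast)
  have proxF: "proximal_on \<alpha> T x y \<longleftrightarrow> (\<exists>p\<in>closure (\<alpha> ` T). p x = p y)" for x y
    by (rule prox_iff[OF F.compact_S]) (use T0 in blast)
  obtain Lp where Lp: "minimal_left_ideal (closure (\<alpha> ` Tp)) Lp" using P.min_exists[OF P.S_li] by blast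
  obtain Lm where Lm: "minimal_left_ideal (closure (\<alpha> ` Tm)) Lm" using M.min_exists[OF M.S_li] by blast
  have uP: "L' = Lp" if "minimal_left_ideal (closure (\<alpha> ` Tp)) L'" for L'
  proof (rule P.trans_unique[OF _ that Lp])
    fix a b c assume "\<exists>p\<in>closure (\<alpha> ` Tp). p a = p b" "\<exists>p\<in>closure (\<alpha> ` Tp). p b = p c"
    then have "proximal_on \<alpha> Tp a b" "proximal_on \<alpha> Tp b c" by (simp_all only: proxP)
    moreover have "transitive_rel (proximal_on \<alpha> Tp)" using fwd unfolding Tp_def .
    ultimately have "proximal_on \<alpha> Tp a c" unfolding transitive_rel_def by blast
    then show "\<exists>p\<in>closure (\<alpha> ` Tp). p a = p c" by (simp only: proxP)
  qed
  have uM: "L' = Lm" if "minimal_left_ideal (closure (\<alpha> ` Tm)) L'" for L'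
  proof (rule M.trans_unique[OF _ that Lm])
    fix a b c assume "\<exists>p\<in>closure (\<alpha> ` Tm). p a = p b" "\<exists>p\<in>closure (\<alpha> ` Tm). p b = p c"
    then have "proximal_on \<alpha> Tm a b" "proximal_on \<alpha> Tm b c" by (simp_all only: proxM)
    moreover have "transitive_rel (proximal_on \<alpha> Tm)" using bwd unfolding Tm_def .
    ultimately have "proximal_on \<alpha> Tm a c" unfolding transitive_rel_def by blast
    then show "\<exists>p\<in>closure (\<alpha> ` Tm). p a = p c" by (simp only: proxM)
  qed
  have kP: "kernel (closure (\<alpha> ` Tp)) = Lp" by (rule P.unique_kernel[OF Lp uP])
  have kM: "kernel (closure (\<alpha> ` Tm)) = Lm" by (rule M.unique_kernel[OF Lm uM])
  have jP: "minimal_idempotents (closure (\<alpha> ` Tp)) = {p \<in> Lp. p \<circ> p = p}" by (rule P.unique_minidem[OF Lp uP])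
  have jM: "minimal_idempotents (closure (\<alpha> ` Tm)) = {p \<in> Lm. p \<circ> p = p}" by (rule M.unique_minidem[OF Lm uM])
  have neP: "{p \<in> Lp. p \<circ> p = p} \<noteq> {}" using P.idem_exists[OF Lp] by blast
  have LpE: "minimal_left_ideal (closure (\<alpha> ` T)) Lp"
    by (rule half_mli_E[OF cpt zero addT cont T0 Tadd Tneg TpT Tp0 Tpadd splitp Lp])
  have LmE: "minimal_left_ideal (closure (\<alpha> ` T)) Lm"
    by (rule half_mli_E[OF cpt zero addT cont T0 Tadd Tneg TmT Tm0 Tmadd splitm Lm])
  have allE: "L = Lp \<or> L = Lm" if L: "minimal_left_ideal (closure (\<alpha> ` T)) L" for L
  proof -
    obtain p where p: "p \<in> L" using li_ne[OF mli_liD[OF L]] by blast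
    have pE: "p \<in> closure (\<alpha> ` T)" using li_sub[OF mli_liD[OF L]] p by blast
    show ?thesis
    proof (cases "p \<in> closure (\<alpha> ` Tp)")
      case True
      obtain L0 where L0: "minimal_left_ideal (closure (\<alpha> ` Tp)) L0" "L0 \<subseteq> (\<lambda>q. q \<circ> p) ` closure (\<alpha> ` Tp)"
        using P.min_exists[OF P.Sq_li[OF True]] by blast
      have "L0 = Lp" by (rule uP[OF L0(1)])
      moreover have "(\<lambda>q. q \<circ> p) ` closure (\<alpha> ` Tp) \<subseteq> L"
        using li_mul[OF mli_liD[OF L]] p EUn by blast
      moreover have "Lp \<noteq> {}" by (rule li_ne[OF mli_liD[OF Lp]])
      ultimately have "Lp \<inter> L \<noteq> {}" using L0(2) by blast
      then have "Lp = L" by (rule F.mli_inter[OF LpE L])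
      then show ?thesis by blast
    next
      case False
      then have True: "p \<in> closure (\<alpha> ` Tm)" using pE EUn by blast
      obtain L0 where L0: "minimal_left_ideal (closure (\<alpha> ` Tm)) L0" "L0 \<subseteq> (\<lambda>q. q \<circ> p) ` closure (\<alpha> ` Tm)"
        using M.min_exists[OF M.Sq_li[OF True]] by blast
      have "L0 = Lm" by (rule uM[OF L0(1)])
      moreover have "(\<lambda>q. q \<circ> p) ` closure (\<alpha> ` Tm) \<subseteq> L"
        using li_mul[OF mli_liD[OF L]] p EUn by blast
      moreover have "Lm \<noteq> {}" by (rule li_ne[OF mli_liD[OF Lm]])
      ultimately have "Lm \<inter> L \<noteq> {}" using L0(2) by blast
      then have "Lm = L" by (rule F.mli_inter[OF LmE L])
      then show ?thesis by blast
    qed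
  qed
  have setE: "{I. minimal_left_ideal (closure (\<alpha> ` T)) I} = {Lp, Lm}"
    using allE LpE LmE by blast
  have eqs: "{t\<in>T. t \<ge> 0} = Tp" "{t\<in>T. t \<le> 0} = Tm" unfolding Tp_def Tm_def by simp_all
  show ?thesis
  proof (cases "Lp = Lm")
    case True
    have uF: "L' = Lp" if "minimal_left_ideal (closure (\<alpha> ` T)) L'" for L' using allE[OF that] True by blast
    have c1i: "transitive_rel (proximal_on \<alpha> T)"
      unfolding transitive_rel_def
    proof (intro allI impI)
      fix a b c assume "proximal_on \<alpha> T a b \<and> proximal_on \<alpha> T b c"
      then have h1: "\<exists>p\<in>closure (\<alpha> ` T). p a = p b" and h2: "\<exists>p\<in>closure (\<alpha> ` T). p b = p c"
        by (simp_all only: proxF)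
      have "\<exists>p\<in>closure (\<alpha> ` T). p a = p c" by (rule F.unique_trans[OF LpE uF h1 h2])
      then show "proximal_on \<alpha> T a c" by (simp only: proxF)
    qed
    have c1ii: "\<exists>!I. minimal_left_ideal (closure (\<alpha> ` T)) I" using LpE uF by blast
    have kF: "kernel (closure (\<alpha> ` T)) = Lp" by (rule F.unique_kernel[OF LpE uF])
    have Lpne: "Lp \<noteq> {}" by (rule li_ne[OF mli_liD[OF Lp]])
    show ?thesis unfolding Let_def enveloping_def eqs kP kM jP jM kF
      using c1i c1ii True Lpne neP by simp
  next
    case False
    have disj: "Lp \<inter> Lm = {}" using F.mli_inter[OF LpE LmE] False by blast
    have c1i: "\<not> transitive_rel (proximal_on \<alpha> T)"
    proof
      assume tr: "transitive_rel (proximal_on \<alpha> T)"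
      have "Lp = Lm"
      proof (rule F.trans_unique[OF _ LpE LmE])
        fix a b c assume "\<exists>p\<in>closure (\<alpha> ` T). p a = p b" "\<exists>p\<in>closure (\<alpha> ` T). p b = p c"
        then have "proximal_on \<alpha> T a b" "proximal_on \<alpha> T b c" by (simp_all only: proxF)
        then have "proximal_on \<alpha> T a c" using tr unfolding transitive_rel_def by blast
        then show "\<exists>p\<in>closure (\<alpha> ` T). p a = p c" by (simp only: proxF)
      qed
      then show False using False by blast
    qed
    have c1ii: "\<not> (\<exists>!I. minimal_left_ideal (closure (\<alpha> ` T)) I)" using LpE LmE False by blast
    have dJ: "{p \<in> Lp. p \<circ> p = p} \<inter> {p \<in> Lm. p \<circ> p = p} = {}" using disj by blast
    have nJ: "{p \<in> Lp. p \<circ> p = p} \<noteq> {p \<in> Lm. p \<circ> p = p}" using dJ neP by blast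
    show ?thesis unfolding Let_def enveloping_def eqs kP kM jP jM setE
      using c1i c1ii False disj dJ nJ by simp
  qed
qed

end
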